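(* Suppose $\mathcal C$ is a Distribution Problem satisfying Thin Individual Indifference. (a) If $\mathcal D$ is a quota rule with quota $q<n$, then for any selections $\hat\phi_1,\dots,\hat\phi_T$ of $\Phi^{\mathrm{or}}_{\mathcal D}$: if $T\ge\lceil n/(n-q)\rceil$ then $[\hat\phi_1\circ\cdots\circ\hat\phi_T](x)\in X_A^*$ for all $x\in X$. (b) If $\mathcal D$ is a veto-proof voting rule, then for any selections $\hat\phi_1,\dots,\hat\phi_T$ of $\Phi^{\mathrm{or}}_{\mathcal D}$: if $T\ge n$ then $[\hat\phi_1\circ\cdots\circ\hat\phi_T](x)\in X_A^*$ for all $x\in X$.
   Context: Collective choice problem $\mathcal C$: voters $N=\{1,\dots,n\}$, agenda setter $A$, compact metrizable policy space $X$, continuous preferences $\succsim_i$ with continuous utilities $u_i$; $X_A^*=\arg\max_X u_A$. Distribution Problem: for every $x$ and player $i$, (Scarcity) if $u_i(x)<\max_X u_i$ then either some $j\ne i$ has $u_j(x)>\min_X u_j$ or some $y$ has $u_k(y)>u_k(x)$ for all players $k$; (Transferability) if $u_i(x)>\min_X u_i$ then some $y$ has $u_j(y)>u_j(x)$ for all players $j\ne i$. Thin Individual Indifference: for every player $i$ and $x$, $\{y: y\sim_i x\}\setminus\{x\}$ has empty interior. Voting rule: collection $\mathcal D\subseteq 2^N$ of winning coalitions; quota rule with quota $q$: $\mathcal D=\{D\subseteq N:|D|\ge q\}$; veto-proof: for each voter $i$ some $D\in\mathcal D$ has $D\subseteq N\setminus\{i\}$. $M^{w}_{\mathcal D}(x)=\{y:\exists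 D\in\mathcal D,\ y\succsim_i x\ \forall i\in D\}$, $M^{s}_{\mathcal D}(x)=\{y:\exists D\in\mathcal D,\ y\succ_i x\ \forall i\in D\}$, $M^{as}_{\mathcal D}(x)=\mathrm{cl}[M^{s}_{\mathcal D}(x)]\cup\{x\}$, $V_A^{as}(x\mid\mathcal D)=\max_{y\in M^{as}_{\mathcal D}(x)}u_A(y)$, $\Phi^{\mathrm{or}}_{\mathcal D}(x)=\{y\in M^{w}_{\mathcal D}(x): u_A(y)\ge V_A^{as}(x\mid\mathcal D)\}$. A selection of $\Phi^{\mathrm{or}}_{\mathcal D}$ is a map $\hat\phi:X\to X$ with $\hat\phi(x)\in\Phi^{\mathrm{or}}_{\mathcal D}(x)$ for all $x$. *)

theory Defs
  imports "HOL-Analysis.Analysis"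
begin

text \<open>Encoding: players are 0..n; player 0 is the agenda setter A, players 1..n are the
voters N. The utility of player i is u i; x \<succsim>_i y means u i x \<ge> u i y.\<close>

definition voters :: "nat \<Rightarrow> nat set" where
  "voters n = {1..n}"

definition players :: "nat \<Rightarrow> nat set" where
  "players n = {0..n}"

text \<open>Distribution Problem: Scarcity and Transferability
  (u_i(x) < max_X u_i  iff  some y in X has u_i(y) > u_i(x); similarly for min).\<close>
definition distribution_problem :: "'x set \<Rightarrow> (nat \<Rightarrow> 'x \<Rightarrow> real) \<Rightarrow> nat \<Rightarrow> bool" where
  "distribution_problem X u n \<longleftrightarrow>
     (\<forall>x\<in>X. \<forall>i\<in>players n.
        ((\<exists>y\<in>X. u i y > u i x) \<longrightarrow>
           ((\<exists>j\<in>players n. j \<noteq> i \<and> (\<exists>z\<in>X. u j z < u j x)) \<or>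
            (\<exists>y\<in>X. \<forall>k\<in>players n. u k y > u k x))) \<and>
        ((\<exists>z\<in>X. u i z < u i x) \<longrightarrow>
           (\<exists>y\<in>X. \<forall>j\<in>players n - {i}. u j y > u j x)))"

definition thin_individual_indifference :: "'x::topological_space set \<Rightarrow> (nat \<Rightarrow> 'x \<Rightarrow> real) \<Rightarrow> nat \<Rightarrow> bool" where
  "thin_individual_indifference X u n \<longleftrightarrow>
     (\<forall>i\<in>players n. \<forall>x\<in>X.
        (top_of_set X) interior_of ({y\<in>X. u i y = u i x} - {x}) = {})"

definition quota_rule :: "nat \<Rightarrow> nat \<Rightarrow> nat set set" where
  "quota_rule n q = {S. S \<subseteq> voters n \<and> card S \<ge> q}"

definition veto_proof :: "nat \<Rightarrow> nat set set \<Rightarrow> bool" where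
  "veto_proof n D \<longleftrightarrow> (\<forall>i\<in>voters n. \<exists>S\<in>D. S \<subseteq> voters n - {i})"

definition Mw :: "'x set \<Rightarrow> (nat \<Rightarrow> 'x \<Rightarrow> real) \<Rightarrow> nat set set \<Rightarrow> 'x \<Rightarrow> 'x set" where
  "Mw X u D x = {y\<in>X. \<exists>S\<in>D. \<forall>i\<in>S. u i y \<ge> u i x}"

definition Ms :: "'x set \<Rightarrow> (nat \<Rightarrow> 'x \<Rightarrow> real) \<Rightarrow> nat set set \<Rightarrow> 'x \<Rightarrow> 'x set" where
  "Ms X u D x = {y\<in>X. \<exists>S\<in>D. \<forall>i\<in>S. u i y > u i x}"

definition Mas :: "'x::topological_space set \<Rightarrow> (nat \<Rightarrow> 'x \<Rightarrow> real) \<Rightarrow> nat set set \<Rightarrow> 'x \<Rightarrow> 'x set" where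
  "Mas X u D x = closure (Ms X u D x) \<union> {x}"

text \<open>V_A^as(x|D) = max over M^as(x) of u_A (attained: M^as(x) is compact and nonempty).\<close>
definition VAas :: "'x::topological_space set \<Rightarrow> (nat \<Rightarrow> 'x \<Rightarrow> real) \<Rightarrow> nat set set \<Rightarrow> 'x \<Rightarrow> real" where
  "VAas X u D x = Sup (u 0 ` Mas X u D x)"

definition Phi_or :: "'x::topological_space set \<Rightarrow> (nat \<Rightarrow> 'x \<Rightarrow> real) \<Rightarrow> nat set set \<Rightarrow> 'x \<Rightarrow> 'x set" where
  "Phi_or X u D x = {y\<in>Mw X u D x. u 0 y \<ge> VAas X u D x}"

definition is_selection :: "'x::topological_space set \<Rightarrow> (nat \<Rightarrow> 'x \<Rightarrow> real) \<Rightarrow> nat set set \<Rightarrow> ('x \<Rightarrow> 'x) \<Rightarrow> bool" where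
  "is_selection X u D f \<longleftrightarrow> (\<forall>x\<in>X. f x \<in> Phi_or X u D x)"

text \<open>compose_sel phi T = phi 1 \<circ> phi 2 \<circ> ... \<circ> phi T (phi T applied first).\<close>
fun compose_sel :: "(nat \<Rightarrow> 'x \<Rightarrow> 'x) \<Rightarrow> nat \<Rightarrow> 'x \<Rightarrow> 'x" where
  "compose_sel phi 0 = id"
| "compose_sel phi (Suc k) = compose_sel phi k \<circ> phi (Suc k)"

definition XA_star :: "'x set \<Rightarrow> (nat \<Rightarrow> 'x \<Rightarrow> real) \<Rightarrow> 'x set" where
  "XA_star X u = {x\<in>X. \<forall>y\<in>X. u 0 y \<le> u 0 x}"

end

theory Submission imports Defs begin

definition Zs :: "'x set \<Rightarrow> (nat \<Rightarrow> 'x \<Rightarrow> real) \<Rightarrow> nat \<Rightarrow> 'x \<Rightarrow> nat set" where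
  "Zs X u n x = {i\<in>voters n. \<forall>z\<in>X. u i x \<le> u i z}"

lemma voters_players: "voters n \<subseteq> players n"
  by (auto simp: voters_def players_def)

lemma finite_voters[simp]: "finite (voters n)" and card_voters[simp]: "card (voters n) = n"
  by (auto simp: voters_def)

lemma Zs_sub: "Zs X u n x \<subseteq> voters n"
  by (auto simp: Zs_def)

lemma Phi_X: "y \<in> Phi_or X u D x \<Longrightarrow> y \<in> X"
  by (auto simp: Phi_or_def Mw_def)

lemma V_upper:
  fixes X :: "'x::metric_space set"
  assumes "compact X" "continuous_on X (u 0)" "x \<in> X" "w \<in> Ms X u D x \<or> w = x"
  shows "u 0 w \<le> VAas X u D x"
proof -
  have "Ms X u D x \<subseteq> X" by (auto simp: Ms_def)
  hence "closure (Ms X u D x) \<subseteq> X"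
    using assms(1) by (simp add: closure_minimal compact_imp_closed)
  hence sub: "Mas X u D x \<subseteq> X" using assms(3) by (auto simp: Mas_def)
  have "bdd_above (u 0 ` X)"
    using assms(1,2) by (simp add: bounded_imp_bdd_above compact_continuous_image compact_imp_bounded)
  hence "bdd_above (u 0 ` Mas X u D x)" using sub by (meson bdd_above_mono image_mono)
  moreover have "w \<in> Mas X u D x" using assms(4) closure_subset by (auto simp: Mas_def)
  ultimately show ?thesis unfolding VAas_def by (simp add: cSup_upper)
qed

lemma L2:
  fixes X :: "'x::metric_space set"
  assumes "compact X" "\<forall>i\<in>players n. continuous_on X (u i)" "distribution_problem X u n"
    "D \<subseteq> Pow (voters n)" "x \<in> X" "y \<in> Phi_or X u D x"
    "S' \<in> D" "S' \<subseteq> {i\<in>voters n. u i x \<le> u i y}" "j \<in> voters n - S'"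
  shows "j \<in> Zs X u n y"
proof (rule ccontr)
  assume "j \<notin> Zs X u n y"
  then obtain z0 where "z0 \<in> X" "u j z0 < u j y" using assms(9) by (auto simp: Zs_def not_le)
  have yX: "y \<in> X" using assms(6) Phi_X by blast
  have jp: "j \<in> players n" using assms(9) voters_players by blast
  then obtain z where zX: "z \<in> X" and zs: "\<forall>k\<in>players n - {j}. u k z > u k y"
    using assms(3) yX \<open>z0 \<in> X\<close> \<open>u j z0 < u j y\<close> unfolding distribution_problem_def by blast
  have j0: "j \<noteq> 0" using assms(9) by (auto simp: voters_def)
  have "0 \<in> players n" by (auto simp: players_def)
  hence z0: "u 0 z > u 0 y" using zs j0 by blast
  have "z \<in> Ms X u D x"
    unfolding Ms_def
  proof (intro CollectI conjI bexI[of _ S'] ballI)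
    fix i assume "i \<in> S'"
    hence "i \<in> players n - {j}" "u i x \<le> u i y" using assms(8,9) voters_players by auto
    thus "u i z > u i x" using zs by force
  qed (use zX assms(7) in auto)
  hence "u 0 z \<le> VAas X u D x" using V_upper assms(1,2,5) \<open>0 \<in> players n\<close> by blast
  moreover have "VAas X u D x \<le> u 0 y" using assms(6) by (auto simp: Phi_or_def)
  ultimately show False using z0 by linarith
qed

lemma Mw_S:
  assumes "D \<subseteq> Pow (voters n)" "y \<in> Phi_or X u D x"
  obtains S where "S \<in> D" "S \<subseteq> {i\<in>voters n. u i x \<le> u i y}"
  using assms by (auto simp: Phi_or_def Mw_def)

lemma L1:
  fixes X :: "'x::metric_space set"
  assumes "compact X" "\<forall>i\<in>players n. continuous_on X (u i)" "distribution_problem X u n"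
    "thin_individual_indifference X u n"
    "D \<subseteq> Pow (voters n)" "x \<in> X" "y \<in> Phi_or X u D x" "j \<in> Zs X u n x"
  shows "j \<in> Zs X u n y"
proof -
  obtain S where SD: "S \<in> D" and SS: "S \<subseteq> {i\<in>voters n. u i x \<le> u i y}"
    using Mw_S assms(5,7) by blast
  have jv: "j \<in> voters n" using assms(8) by (simp add: Zs_def)
  show ?thesis
  proof (cases "j \<in> S")
    case False
    thus ?thesis using L2[OF assms(1,2,3,5,6,7) SD SS] jv by blast
  next
    case jS: True
    show ?thesis
    proof (rule ccontr)
      assume "j \<notin> Zs X u n y"
      then obtain z0 where "z0 \<in> X" "u j z0 < u j y" using jv by (auto simp: Zs_def not_le)
      have yX: "y \<in> X" using assms(7) Phi_X by blast
      have jp: "j \<in> players n" using jv voters_players by blast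
      then obtain z where zX: "z \<in> X" and zs: "\<forall>k\<in>players n - {j}. u k z > u k y"
        using assms(3) yX \<open>z0 \<in> X\<close> \<open>u j z0 < u j y\<close> unfolding distribution_problem_def by blast
      have j0: "j \<noteq> 0" using jv by (auto simp: voters_def)
      have p0: "0 \<in> players n" by (auto simp: players_def)
      hence z0: "u 0 z > u 0 y" using zs j0 by blast
      have Vy: "VAas X u D x \<le> u 0 y" using assms(7) by (auto simp: Phi_or_def)
      define I where "I = insert 0 (S - {j})"
      define c where "c = (\<lambda>i. if i = 0 then VAas X u D x else u i x)"
      define U where "U = (\<Inter>i\<in>I. X \<inter> u i -` {c i<..}) - {x}"
      have finI: "finite I" unfolding I_def using SD assms(5) finite_subset[of S "voters n"] by auto
      have Ip: "I \<subseteq> players n" unfolding I_def using SD assms(5) voters_players p0 by auto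
      have "openin (top_of_set X) (\<Inter>i\<in>I. X \<inter> u i -` {c i<..})"
        apply (rule openin_INT2[OF finI])
        using Ip assms(2) by (auto simp: I_def intro!: continuous_openin_preimage_gen)
      moreover have "closedin (top_of_set X) {x}" using assms(6) by (simp add: closed_subset)
      ultimately have Uo: "openin (top_of_set X) U" unfolding U_def by (simp add: openin_diff)
      have "U \<subseteq> {w\<in>X. u j w = u j x} - {x}"
      proof
        fix w assume wU: "w \<in> U"
        hence wX: "w \<in> X" and wx: "w \<noteq> x" unfolding U_def I_def by auto
        have w0: "u 0 w > VAas X u D x" using wU unfolding U_def I_def c_def by auto
        have wi: "\<forall>i\<in>S - {j}. u i w > u i x"
        proof
          fix i assume "i \<in> S - {j}"
          moreover hence "i \<noteq> 0" using SD assms(5) by (force simp: voters_def)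
          ultimately have "i \<in> I" "c i = u i x" unfolding I_def c_def by auto
          moreover have "w \<in> X \<inter> u i -` {c i<..}" using wU \<open>i \<in> I\<close> unfolding U_def by blast
          ultimately show "u i w > u i x" by auto
        qed
        have "u j x \<le> u j w" using assms(8) wX by (auto simp: Zs_def)
        moreover have "\<not> u j w > u j x"
        proof
          assume "u j w > u j x"
          hence "w \<in> Ms X u D x" using wi wX SD unfolding Ms_def by blast
          hence "u 0 w \<le> VAas X u D x" using V_upper assms(1,2,6) p0 by blast
          thus False using w0 by linarith
        qed
        ultimately show "w \<in> {w\<in>X. u j w = u j x} - {x}" using wX wx by auto
      qed
      hence "U \<subseteq> (top_of_set X) interior_of ({w\<in>X. u j w = u j x} - {x})"
        using Uo by (simp add: interior_of_maximal)
      hence Ue: "U = {}" using assms(4) jp assms(6) unfolding thin_individual_indifference_def by blast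
      have "u 0 x \<le> VAas X u D x" using V_upper assms(1,2,6) p0 by blast
      hence "z \<noteq> x" using z0 Vy by auto
      moreover have "\<forall>i\<in>I. z \<in> X \<inter> u i -` {c i<..}"
      proof
        fix i assume iI: "i \<in> I"
        show "z \<in> X \<inter> u i -` {c i<..}"
        proof (cases "i = 0")
          case True thus ?thesis using zX z0 Vy by (auto simp: c_def)
        next
          case False
          hence "i \<in> S - {j}" using iI by (auto simp: I_def)
          hence "u i x \<le> u i y" "i \<in> players n - {j}" using SS voters_players by auto
          thus ?thesis using zs zX False by (force simp: c_def)
        qed
      qed
      ultimately have "z \<in> U" unfolding U_def by blast
      thus False using Ue by blast
    qed
  qed
qed

lemma step_quota:
  fixes X :: "'x::metric_space set"
  assumes "compact X" "\<forall>i\<in>players n. continuous_on X (u i)" "distribution_problem X u n"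
    "thin_individual_indifference X u n" "q < n"
    "x \<in> X" "y \<in> Phi_or X u (quota_rule n q) x"
  shows "min n (card (Zs X u n x) + (n - q)) \<le> card (Zs X u n y)"
proof -
  let ?D = "quota_rule n q"
  define S0 where "S0 = {i\<in>voters n. u i x \<le> u i y}"
  have DP: "?D \<subseteq> Pow (voters n)" by (auto simp: quota_rule_def)
  obtain S where SD: "S \<in> ?D" and SS: "S \<subseteq> S0" using Mw_S[OF DP assms(7)] S0_def by blast
  have finS0: "finite S0" unfolding S0_def by simp
  have S0v: "S0 \<subseteq> voters n" unfolding S0_def by auto
  have "q \<le> card S" using SD by (simp add: quota_rule_def)
  also have "card S \<le> card S0" using SS finS0 card_mono by blast
  finally have qS0: "q \<le> card S0" .
  have yX: "y \<in> X" using assms(7) Phi_X by blast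
  have ZxS0: "Zs X u n x \<subseteq> S0" using yX unfolding Zs_def S0_def by auto
  have Zsub: "Zs X u n x \<subseteq> Zs X u n y" using L1[OF assms(1-4) DP assms(6,7)] by blast
  have finZy: "finite (Zs X u n y)" by (rule finite_subset[OF Zs_sub finite_voters])
  show ?thesis
  proof (cases "card S0 = q")
    case True
    hence "S0 \<in> ?D" using S0v by (simp add: quota_rule_def)
    hence "voters n - S0 \<subseteq> Zs X u n y" using L2[OF assms(1-3) DP assms(6,7)] S0_def by blast
    hence "Zs X u n x \<union> (voters n - S0) \<subseteq> Zs X u n y" using Zsub by blast
    hence "card (Zs X u n x \<union> (voters n - S0)) \<le> card (Zs X u n y)" using finZy card_mono by blast
    moreover have "card (Zs X u n x \<union> (voters n - S0)) = card (Zs X u n x) + card (voters n - S0)"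
      by (rule card_Un_disjoint) (use ZxS0 finite_subset[OF Zs_sub] in auto)
    moreover have "card (voters n - S0) = n - q" using True S0v by (simp add: card_Diff_subset finS0)
    ultimately show ?thesis by linarith
  next
    case False
    hence gt: "card S0 > q" using qS0 by linarith
    have "voters n \<subseteq> Zs X u n y"
    proof
      fix j assume jv: "j \<in> voters n"
      have "card (S0 - {j}) \<ge> card S0 - 1" using finS0 by (simp add: card_Diff_singleton_if)
      hence "card (S0 - {j}) \<ge> q" using gt by linarith
      hence "S0 - {j} \<in> ?D" using S0v by (auto simp: quota_rule_def)
      thus "j \<in> Zs X u n y" using L2[OF assms(1-3) DP assms(6,7), of "S0 - {j}" j] jv S0_def by blast
    qed
    hence "card (voters n) \<le> card (Zs X u n y)" using finZy card_mono by blast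
    hence "n \<le> card (Zs X u n y)" by simp
    thus ?thesis by linarith
  qed
qed

lemma step_veto:
  fixes X :: "'x::metric_space set"
  assumes "compact X" "\<forall>i\<in>players n. continuous_on X (u i)" "distribution_problem X u n"
    "thin_individual_indifference X u n" "D \<subseteq> Pow (voters n)" "veto_proof n D"
    "x \<in> X" "y \<in> Phi_or X u D x"
  shows "min n (card (Zs X u n x) + 1) \<le> card (Zs X u n y)"
proof -
  define S0 where "S0 = {i\<in>voters n. u i x \<le> u i y}"
  obtain S where SD: "S \<in> D" and SS: "S \<subseteq> S0" using Mw_S[OF assms(5,8)] S0_def by blast
  have S0v: "S0 \<subseteq> voters n" unfolding S0_def by auto
  have yX: "y \<in> X" using assms(8) Phi_X by blast
  have ZxS0: "Zs X u n x \<subseteq> S0" using yX unfolding Zs_def S0_def by auto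
  have Zsub: "Zs X u n x \<subseteq> Zs X u n y" using L1[OF assms(1-5) assms(7,8)] by blast
  have finZy: "finite (Zs X u n y)" by (rule finite_subset[OF Zs_sub finite_voters])
  have finZx: "finite (Zs X u n x)" by (rule finite_subset[OF Zs_sub finite_voters])
  show ?thesis
  proof (cases "Zs X u n x = voters n")
    case True
    hence "voters n \<subseteq> Zs X u n y" using Zsub by simp
    hence "card (voters n) \<le> card (Zs X u n y)" using finZy card_mono by blast
    hence "n \<le> card (Zs X u n y)" by simp
    thus ?thesis by linarith
  next
    case False
    have "\<exists>j\<in>voters n - Zs X u n x. j \<in> Zs X u n y"
    proof (cases "voters n - S \<subseteq> Zs X u n x")
      case False
      then obtain j where "j \<in> voters n - S" "j \<notin> Zs X u n x" by blast
      moreover have "S \<subseteq> {i\<in>voters n. u i x \<le> u i y}" using SS unfolding S0_def .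
      ultimately have "j \<in> Zs X u n y" using L2[OF assms(1-3,5,7,8) SD] by blast
      thus ?thesis using \<open>j \<in> voters n - S\<close> \<open>j \<notin> Zs X u n x\<close> by blast
    next
      case True
      hence "S0 = voters n" using SS ZxS0 S0v by blast
      have "\<not> voters n \<subseteq> Zs X u n x" using \<open>Zs X u n x \<noteq> voters n\<close> Zs_sub[of X u n x] by blast
      then obtain j where jv: "j \<in> voters n" "j \<notin> Zs X u n x" by (auto simp only: subset_iff)
      then obtain S' where "S' \<in> D" "S' \<subseteq> voters n - {j}" using assms(6) unfolding veto_proof_def by blast
      moreover have "S' \<subseteq> {i\<in>voters n. u i x \<le> u i y}" using \<open>S' \<subseteq> voters n - {j}\<close> \<open>S0 = voters n\<close> unfolding S0_def by blast
      ultimately have "j \<in> Zs X u n y" using L2[OF assms(1-3,5,7,8), of S' j] jv by blast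
      thus ?thesis using jv by blast
    qed
    then obtain j where "j \<notin> Zs X u n x" "j \<in> Zs X u n y" by blast
    hence "insert j (Zs X u n x) \<subseteq> Zs X u n y" using Zsub by blast
    hence "card (insert j (Zs X u n x)) \<le> card (Zs X u n y)" using finZy card_mono by blast
    thus ?thesis using \<open>j \<notin> Zs X u n x\<close> finZx by simp
  qed
qed

lemma iter:
  assumes H: "\<forall>x\<in>X. \<forall>y\<in>Phi_or X u D x. min n (card (Zs X u n x) + d) \<le> card (Zs X u n y)"
  shows "(\<forall>t\<in>{1..k}. is_selection X u D (phi t)) \<Longrightarrow> x \<in> X \<Longrightarrow>
     compose_sel phi k x \<in> X \<and> min n (card (Zs X u n x) + k * d) \<le> card (Zs X u n (compose_sel phi k x)) \<and>
     (k \<ge> 1 \<longrightarrow> (\<exists>x'\<in>X. compose_sel phi k x \<in> Phi_or X u D x'))"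
proof (induction k arbitrary: x)
  case 0
  then show ?case by simp
next
  case (Suc k)
  let ?y = "phi (Suc k) x"
  have yP: "?y \<in> Phi_or X u D x" using Suc.prems unfolding is_selection_def by auto
  hence yX: "?y \<in> X" using Phi_X by blast
  have hy: "min n (card (Zs X u n x) + d) \<le> card (Zs X u n ?y)" using H Suc.prems(2) yP by blast
  have IH: "compose_sel phi k ?y \<in> X \<and> min n (card (Zs X u n ?y) + k * d) \<le> card (Zs X u n (compose_sel phi k ?y)) \<and>
     (k \<ge> 1 \<longrightarrow> (\<exists>x'\<in>X. compose_sel phi k ?y \<in> Phi_or X u D x'))"
    using Suc.IH[OF _ yX] Suc.prems(1) by auto
  have eq: "compose_sel phi (Suc k) x = compose_sel phi k ?y" by simp
  have "min n (card (Zs X u n x) + Suc k * d) \<le> min n (card (Zs X u n ?y) + k * d)"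
    using hy by simp
  hence c: "min n (card (Zs X u n x) + Suc k * d) \<le> card (Zs X u n (compose_sel phi (Suc k) x))"
    using IH unfolding eq by (meson le_trans)
  show ?case
  proof (cases k)
    case 0
    thus ?thesis using yX yP Suc.prems(2) c by auto
  next
    case (Suc m)
    thus ?thesis using IH c eq by auto
  qed
qed

lemma final:
  fixes X :: "'x::metric_space set"
  assumes "compact X" "\<forall>i\<in>players n. continuous_on X (u i)" "distribution_problem X u n"
    "D \<subseteq> Pow (voters n)" "x' \<in> X" "w \<in> Phi_or X u D x'" "n \<le> card (Zs X u n w)"
  shows "w \<in> XA_star X u"
proof -
  have wX: "w \<in> X" using assms(6) Phi_X by blast
  have Zall: "Zs X u n w = voters n"
    using assms(7) Zs_sub by (metis card_seteq card_voters finite_voters)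
  have p0: "0 \<in> players n" by (auto simp: players_def)
  show ?thesis
  proof (rule ccontr)
    assume "w \<notin> XA_star X u"
    then obtain y where "y \<in> X" "u 0 y > u 0 w" using wX by (auto simp: XA_star_def not_le)
    hence sc: "(\<exists>j\<in>players n. j \<noteq> 0 \<and> (\<exists>z\<in>X. u j z < u j w)) \<or>
            (\<exists>y\<in>X. \<forall>k\<in>players n. u k y > u k w)"
      using assms(3) wX p0 unfolding distribution_problem_def by blast
    show False
    proof (cases "\<exists>j\<in>players n. j \<noteq> 0 \<and> (\<exists>z\<in>X. u j z < u j w)")
      case True
      then obtain j z where "j \<in> players n" "j \<noteq> 0" "z \<in> X" "u j z < u j w" by blast
      hence "j \<in> voters n" by (auto simp: players_def voters_def)
      hence "j \<in> Zs X u n w" using Zall by blast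
      thus False using \<open>z \<in> X\<close> \<open>u j z < u j w\<close> by (force simp: Zs_def)
    next
      case False
      then obtain y' where y'X: "y' \<in> X" and y's: "\<forall>k\<in>players n. u k y' > u k w" using sc by blast
      obtain S where SD: "S \<in> D" and SS: "S \<subseteq> {i\<in>voters n. u i x' \<le> u i w}"
        using Mw_S[OF assms(4,6)] by blast
      have "y' \<in> Ms X u D x'"
        unfolding Ms_def
      proof (intro CollectI conjI bexI[of _ S] ballI)
        fix i assume "i \<in> S"
        hence "i \<in> players n" "u i x' \<le> u i w" using SS voters_players by auto
        thus "u i y' > u i x'" using y's by force
      qed (use y'X SD in auto)
      hence "u 0 y' \<le> VAas X u D x'" using V_upper assms(1,2,5) p0 by blast
      moreover have "VAas X u D x' \<le> u 0 w" using assms(6) by (auto simp: Phi_or_def)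
      ultimately show False using y's p0 by force
    qed
  qed
qed

theorem lemma10:
  fixes X :: "'x::metric_space set" and u :: "nat \<Rightarrow> 'x \<Rightarrow> real" and n :: nat
  assumes "n \<ge> 1"
    and "compact X"
    and "\<forall>i\<in>players n. continuous_on X (u i)"
    and "distribution_problem X u n"
    and "thin_individual_indifference X u n"
  shows "(\<forall>q T phi. q < n \<longrightarrow>
            (\<forall>t\<in>{1..T}. is_selection X u (quota_rule n q) (phi t)) \<longrightarrow>
            int T \<ge> \<lceil>real n / real (n - q)\<rceil> \<longrightarrow>
            (\<forall>x\<in>X. compose_sel phi T x \<in> XA_star X u))
       \<and> (\<forall>D T phi. D \<subseteq> Pow (voters n) \<longrightarrow> veto_proof n D \<longrightarrow>
            (\<forall>t\<in>{1..T}. is_selection X u D (phi t)) \<longrightarrow>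
            T \<ge> n \<longrightarrow>
            (\<forall>x\<in>X. compose_sel phi T x \<in> XA_star X u))"
proof (intro conjI allI impI ballI)
  fix q T phi x
  assume q: "q < n" and sel: "\<forall>t\<in>{1..T}. is_selection X u (quota_rule n q) (phi t)"
    and Tc: "int T \<ge> \<lceil>real n / real (n - q)\<rceil>" and xX: "x \<in> X"
  have "real n / real (n - q) \<le> real T" using Tc by (simp add: ceiling_le_iff)
  hence "real n \<le> real T * real (n - q)" using q by (simp add: divide_le_eq)
  hence nT: "n \<le> T * (n - q)" by (metis of_nat_le_iff of_nat_mult)
  hence T1: "T \<ge> 1" using assms(1) by (cases T) auto
  have DP: "quota_rule n q \<subseteq> Pow (voters n)" by (auto simp: quota_rule_def)
  have H: "\<forall>x\<in>X. \<forall>y\<in>Phi_or X u (quota_rule n q) x.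
      min n (card (Zs X u n x) + (n - q)) \<le> card (Zs X u n y)"
    using step_quota[OF assms(2-5) q] by blast
  from iter[OF H sel xX] T1 obtain x' where x'X: "x' \<in> X"
    and P: "compose_sel phi T x \<in> Phi_or X u (quota_rule n q) x'"
    and c: "min n (card (Zs X u n x) + T * (n - q)) \<le> card (Zs X u n (compose_sel phi T x))" by blast
  have "n \<le> card (Zs X u n (compose_sel phi T x))" using c nT by linarith
  thus "compose_sel phi T x \<in> XA_star X u" using final[OF assms(2-4) DP x'X P] by blast
next
  fix D T phi x
  assume DP: "D \<subseteq> Pow (voters n)" and vp: "veto_proof n D"
    and sel: "\<forall>t\<in>{1..T}. is_selection X u D (phi t)" and nT: "T \<ge> n" and xX: "x \<in> X"
  have T1: "T \<ge> 1" using assms(1) nT by linarith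
  have H: "\<forall>x\<in>X. \<forall>y\<in>Phi_or X u D x.
      min n (card (Zs X u n x) + 1) \<le> card (Zs X u n y)"
    using step_veto[OF assms(2-5) DP vp] by blast
  from iter[OF H sel xX] T1 obtain x' where x'X: "x' \<in> X"
    and P: "compose_sel phi T x \<in> Phi_or X u D x'"
    and c: "min n (card (Zs X u n x) + T * 1) \<le> card (Zs X u n (compose_sel phi T x))" by blast
  have "n \<le> card (Zs X u n (compose_sel phi T x))" using c nT by linarith
  thus "compose_sel phi T x \<in> XA_star X u" using final[OF assms(2-4) DP x'X P] by blast
qed

end
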